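(* Consider periods $t=0,1,\dots,T$ with treatment statuses $D_0=0,D_1,\dots,D_T\in\{0,1\}$ and outcomes $Y_t$, and covariates $X=(X_1,\dots,X_T)$. For $g\in\{1,\dots,T\}$ let $D^g=\mathbf 1\{(D_0,\dots,D_T)=(0,\dots,0,D_g=1,1,\dots,1)\}$ be the indicator of being first treated in period $g$ (and treated thereafter), and $D^0=\mathbf 1\{(D_0,\dots,D_T)=(0,\dots,0)\}$ the indicator of never being treated. Assume $\mathbb E[D^g]>0$ and $\mathbb E[D^0\mid X]>0$ a.s. Let $P^s(X)$, $s=0,\dots,T$, be postulated models for the propensity scores $\mathbb E[D^s\mid X]$, with $P^0(X)>0$, and let $\mu_0^t(X)$ be a postulated model for $\mathbb E[Y_t\mid D^0=1,X]$. Define $$\tau_t^{g,DR}=\frac{1}{\mathbb E[D^g]}\,\mathbb E\!\left[\Big(D^g-\frac{P^g(X)}{P^0(X)}D^0\Big)\big(Y_t-\mu_0^t(X)\big)\right],$$ and $\theta^t_{DIM}(g,x)=\mathbb E[Y_t\mid D^g=1,X=x]-\mathbb E[Y_t\mid D^0=1,X=x]$. If either $P^s(X)=\mathbb E[D^s\mid X]$ a.s. for all $s\in\{0,1,\dots,T\}$, or $\mu_0^t(X)=\mathbb E[Y_t\mid D^0=1,X]$ a.s. (not necessarily both), then $$\tau_t^{g,DR}=\int\theta^t_{DIM}(g,x)\,dF_{X\mid D^g=1}(x),$$ where $F_{X\mid D^g=1}$ is the conditional distribution of $X$ given $D^g=1$.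
   Context: This is the staggered-adoption setting: each unit is either never treated or is first treated in some period $g$ and remains treated afterwards. All expectations involved are assumed to exist and be finite. *)

theory Defs
  imports "HOL-Probability.Probability"
begin

definition cohort :: "(nat \<Rightarrow> 'a \<Rightarrow> real) \<Rightarrow> nat \<Rightarrow> nat \<Rightarrow> 'a \<Rightarrow> real" where
  "cohort D T g w =
     (if g = 0 then (if (\<forall>t\<le>T. D t w = 0) then 1 else 0)
      else (if (\<forall>t\<le>T. D t w = (if g \<le> t then 1 else 0)) then 1 else 0))"

definition sigmaX :: "'a measure \<Rightarrow> 'x measure \<Rightarrow> ('a \<Rightarrow> 'x) \<Rightarrow> 'a measure" where
  "sigmaX M N X = vimage_algebra (space M) X N"

definition cohort_set :: "'a measure \<Rightarrow> (nat \<Rightarrow> 'a \<Rightarrow> real) \<Rightarrow> nat \<Rightarrow> nat \<Rightarrow> 'a set" where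
  "cohort_set M D T s = {w \<in> space M. cohort D T s w = 1}"

definition tau_DR ::
  "'a measure \<Rightarrow> (nat \<Rightarrow> 'a \<Rightarrow> real) \<Rightarrow> nat \<Rightarrow> ('a \<Rightarrow> 'x) \<Rightarrow> (nat \<Rightarrow> 'x \<Rightarrow> real)
    \<Rightarrow> ('x \<Rightarrow> real) \<Rightarrow> ('a \<Rightarrow> real) \<Rightarrow> nat \<Rightarrow> real" where
  "tau_DR M D T X P mu Yt g =
     (1 / (\<integral>w. cohort D T g w \<partial>M)) *
     (\<integral>w. (cohort D T g w - P g (X w) / P 0 (X w) * cohort D T 0 w) * (Yt w - mu (X w)) \<partial>M)"

end

theory Submission
  imports Defs
begin

lemma cohort_meas[measurable]:
  assumes [measurable]: "\<And>s. D s \<in> borel_measurable M"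
  shows "cohort D T g \<in> borel_measurable M"
proof -
  have e: "cohort D T g = (\<lambda>w. if g = 0 then (if (\<forall>t\<in>{..T}. D t w = 0) then 1 else 0)
      else (if (\<forall>t\<in>{..T}. D t w = (if g \<le> t then 1 else 0)) then 1 else 0))"
    by (auto simp: cohort_def fun_eq_iff)
  show ?thesis unfolding e by measurable
qed

lemma cohort_ind: "w \<in> space M \<Longrightarrow> cohort D T s w = indicator (cohort_set M D T s) w"
  by (auto simp: cohort_def cohort_set_def indicator_def)

lemma cohort_set_sets:
  assumes [measurable]: "\<And>s. D s \<in> borel_measurable M"
  shows "cohort_set M D T s \<in> sets M"
  unfolding cohort_set_def by measurable

lemma sigmaX_sub: "X \<in> measurable M N \<Longrightarrow> subalgebra M (sigmaX M N X)"
  unfolding sigmaX_def subalgebra_def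
  by (auto simp: sets_vimage_algebra2 measurable_def Int_commute intro: measurable_sets)

lemma sigmaX_meas: "X \<in> measurable M N \<Longrightarrow> f \<in> borel_measurable N \<Longrightarrow>
   (\<lambda>w. f (X w)) \<in> borel_measurable (sigmaX M N X)"
  unfolding sigmaX_def
  by (rule measurable_compose[OF measurable_vimage_algebra1 ]) (auto simp: measurable_def)

lemma unif_density:
  assumes "A \<in> sets M" "emeasure M A \<noteq> 0" "emeasure M A \<noteq> \<infinity>"
  shows "uniform_measure M A = density M (\<lambda>x. ennreal (indicator A x / measure M A))"
proof -
  have p: "measure M A > 0" using assms
    by (simp add: emeasure_eq_ennreal_measure zero_less_measure_iff)
  show ?thesis unfolding uniform_measure_def
    using assms p
    by (intro arg_cong[where f="density M"] ext)
       (auto simp: emeasure_eq_ennreal_measure divide_ennreal indicator_def divide_ennreal[of 1, simplified])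
qed


lemma unif_integral:
  fixes f :: "_ \<Rightarrow> real"
  assumes A: "A \<in> sets M" "emeasure M A \<noteq> 0" "emeasure M A \<noteq> \<infinity>"
    and [measurable]: "f \<in> borel_measurable M"
  shows "integral\<^sup>L (uniform_measure M A) f = (\<integral>x. indicator A x * f x \<partial>M) / measure M A"
proof -
  have [measurable]: "A \<in> sets M" by (rule A)
  have "integral\<^sup>L (uniform_measure M A) f = (\<integral>x. (indicator A x / measure M A) *\<^sub>R f x \<partial>M)"
    unfolding unif_density[OF A] by (rule integral_density) (auto)
  also have "\<dots> = (\<integral>x. (indicator A x * f x) / measure M A \<partial>M)"
    by (simp add: field_simps)
  also have "\<dots> = (\<integral>x. indicator A x * f x \<partial>M) / measure M A"
    by simp
  finally show ?thesis .
qed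

lemma cond_unif:
  assumes P: "prob_space M" and A[measurable]: "A \<in> sets M" and sub: "subalgebra M F"
    and hm[measurable]: "h \<in> borel_measurable F" and Ym[measurable]: "Y \<in> borel_measurable M"
    and int: "integrable M (\<lambda>w. indicator A w * h w * Y w)"
  shows "integrable M (\<lambda>w. indicator A w * h w * real_cond_exp (uniform_measure M A) F Y w)"
    "(\<integral>w. indicator A w * h w * real_cond_exp (uniform_measure M A) F Y w \<partial>M) = (\<integral>w. indicator A w * h w * Y w \<partial>M)"
proof -
  interpret prob_space M by (rule P)
  have hM[measurable]: "h \<in> borel_measurable M" by (rule measurable_from_subalg[OF sub hm])
  have rF: "real_cond_exp (uniform_measure M A) F Y \<in> borel_measurable F" by measurable
  have rM[measurable]: "real_cond_exp (uniform_measure M A) F Y \<in> borel_measurable M"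
    by (rule measurable_from_subalg[OF sub rF])
  have "integrable M (\<lambda>w. indicator A w * h w * real_cond_exp (uniform_measure M A) F Y w) \<and>
    (\<integral>w. indicator A w * h w * real_cond_exp (uniform_measure M A) F Y w \<partial>M) = (\<integral>w. indicator A w * h w * Y w \<partial>M)"
  proof (cases "emeasure M A = 0")
    case True
    then have ae: "AE w in M. w \<notin> A" by (intro AE_not_in) auto
    have z1: "AE w in M. indicator A w * h w * real_cond_exp (uniform_measure M A) F Y w = (0::real)"
      using ae by eventually_elim auto
    have z2: "AE w in M. indicator A w * h w * Y w = (0::real)"
      using ae by eventually_elim auto
    show ?thesis
      using integrable_cong_AE[OF _ _ z1] integral_cong_AE[OF _ _ z1] integral_cong_AE[OF _ _ z2]
      by simp
  next
    case False
    have fin: "emeasure M A \<noteq> \<infinity>" by simp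
    have p: "measure M A > 0" using False
      by (simp add: emeasure_eq_measure zero_less_measure_iff)
    define U where "U = uniform_measure M A"
    have U: "U = density M (\<lambda>x. ennreal (indicator A x / measure M A))"
      unfolding U_def by (rule unif_density[OF A False fin])
    interpret U: prob_space U unfolding U_def by (rule prob_space_uniform_measure[OF False fin])
    have subU: "subalgebra U F" using sub unfolding subalgebra_def U_def by simp
    interpret UF: finite_measure_subalgebra U F
      by (unfold_locales) (rule subU)
    have dm: "(\<lambda>x. indicator A x / measure M A) \<in> borel_measurable M" by measurable
    have dnn: "AE x in M. 0 \<le> indicator A x / measure M A" by simp
    have eq1: "\<And>f::_\<Rightarrow>real. f \<in> borel_measurable M \<Longrightarrow> integrable U f \<longleftrightarrow> integrable M (\<lambda>x. indicator A x * f x)"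
    proof -
      fix f :: "_ \<Rightarrow> real" assume [measurable]: "f \<in> borel_measurable M"
      have "integrable U f \<longleftrightarrow> integrable M (\<lambda>x. (indicator A x / measure M A) *\<^sub>R f x)"
        unfolding U by (rule integrable_density) (auto)
      also have "\<dots> \<longleftrightarrow> integrable M (\<lambda>x. (1 / measure M A) * (indicator A x * f x))"
        by (simp add: field_simps)
      also have "\<dots> \<longleftrightarrow> integrable M (\<lambda>x. indicator A x * f x)"
        using p by (subst integrable_mult_left_iff) auto
      finally show "integrable U f \<longleftrightarrow> integrable M (\<lambda>x. indicator A x * f x)" .
    qed
    have eq2: "\<And>f::_\<Rightarrow>real. f \<in> borel_measurable M \<Longrightarrow> integral\<^sup>L U f = (\<integral>x. indicator A x * f x \<partial>M) / measure M A"
    proof -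
      fix f :: "_ \<Rightarrow> real" assume [measurable]: "f \<in> borel_measurable M"
      have "integral\<^sup>L U f = (\<integral>x. (indicator A x / measure M A) *\<^sub>R f x \<partial>M)"
        unfolding U by (rule integral_density) (auto)
      also have "\<dots> = (\<integral>x. (indicator A x * f x) / measure M A \<partial>M)"
        by (simp add: field_simps)
      also have "\<dots> = (\<integral>x. indicator A x * f x \<partial>M) / measure M A"
        by simp
      finally show "integral\<^sup>L U f = (\<integral>x. indicator A x * f x \<partial>M) / measure M A" .
    qed
    have i1: "integrable U (\<lambda>x. h x * Y x)"
      using int by (subst eq1) (auto simp: mult.assoc)
    have YU: "Y \<in> borel_measurable U" unfolding U_def by simp
    have c1: "integrable U (\<lambda>x. h x * real_cond_exp U F Y x)"
      and c2: "(\<integral>x. h x * real_cond_exp U F Y x \<partial>U) = (\<integral>x. h x * Y x \<partial>U)"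
      using UF.real_cond_exp_intg[OF i1 hm YU] by auto
    have "integrable M (\<lambda>x. indicator A x * (h x * real_cond_exp U F Y x))"
      using c1 eq1[of "\<lambda>x. h x * real_cond_exp U F Y x"] rM hM by (simp add: U_def)
    moreover have "(\<integral>x. indicator A x * (h x * real_cond_exp U F Y x) \<partial>M) = (\<integral>x. indicator A x * (h x * Y x) \<partial>M)"
      using c2 p eq2[of "\<lambda>x. h x * real_cond_exp U F Y x"] eq2[of "\<lambda>x. h x * Y x"] rM hM by (simp add: U_def)
    ultimately show ?thesis by (simp add: U_def mult.assoc)
  qed
  then show "integrable M (\<lambda>w. indicator A w * h w * real_cond_exp (uniform_measure M A) F Y w)"
    "(\<integral>w. indicator A w * h w * real_cond_exp (uniform_measure M A) F Y w \<partial>M) = (\<integral>w. indicator A w * h w * Y w \<partial>M)"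
    by auto
qed


lemma integrable_eq_on: "integrable M g \<Longrightarrow> (\<And>x. x \<in> space M \<Longrightarrow> f x = g x) \<Longrightarrow> integrable M f"
  using Bochner_Integration.integrable_cong[of M M f g] by simp

theorem proposition7:
  fixes M :: "'a measure" and N :: "'x measure"
    and T g t :: nat
    and D Y :: "nat \<Rightarrow> 'a \<Rightarrow> real"
    and X :: "'a \<Rightarrow> 'x"
    and P :: "nat \<Rightarrow> 'x \<Rightarrow> real"
    and mu0 :: "'x \<Rightarrow> real"
    and m :: "nat \<Rightarrow> 'x \<Rightarrow> real"
  assumes prob: "prob_space M"
    and D_meas: "\<And>s. D s \<in> borel_measurable M"
    and Y_meas: "\<And>s. Y s \<in> borel_measurable M"
    and X_meas: "X \<in> measurable M N"
    and P_meas: "\<And>s. P s \<in> borel_measurable N"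
    and mu0_meas: "mu0 \<in> borel_measurable N"
    and m_meas: "\<And>s. m s \<in> borel_measurable N"
    and D_binary: "\<And>s w. s \<le> T \<Longrightarrow> w \<in> space M \<Longrightarrow> D s w \<in> {0, 1}"
    and D0_zero: "\<And>w. w \<in> space M \<Longrightarrow> D 0 w = 0"
    and staggered: "\<And>w. w \<in> space M \<Longrightarrow>
        (\<forall>s\<le>T. D s w = 0) \<or> (\<exists>h\<in>{1..T}. \<forall>s\<le>T. D s w = (if h \<le> s then 1 else 0))"
    and g_range: "g \<in> {1..T}"
    and t_range: "t \<le> T"
    and Eg_pos: "(\<integral>w. cohort D T g w \<partial>M) > 0"
    and E0X_pos: "AE w in M. real_cond_exp M (sigmaX M N X) (cohort D T 0) w > 0"
    and P0_pos: "\<And>x. x \<in> space N \<Longrightarrow> P 0 x > 0"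
    \<comment> \<open>m s is a version of x \<mapsto> E[Y_t | D^s = 1, X = x] for s = g and s = 0\<close>
    and m_g: "AE w in uniform_measure M (cohort_set M D T g).
        m g (X w) = real_cond_exp (uniform_measure M (cohort_set M D T g)) (sigmaX M N X) (Y t) w"
    and m_0: "AE w in M.
        m 0 (X w) = real_cond_exp (uniform_measure M (cohort_set M D T 0)) (sigmaX M N X) (Y t) w"
    \<comment> \<open>all expectations involved exist and are finite\<close>
    and int_Y: "integrable M (Y t)"
    and int_DR: "integrable M (\<lambda>w. (cohort D T g w - P g (X w) / P 0 (X w) * cohort D T 0 w)
                                    * (Y t w - mu0 (X w)))"
    and int_gY: "integrable M (\<lambda>w. cohort D T g w * Y t w)"
    and int_gmu: "integrable M (\<lambda>w. cohort D T g w * mu0 (X w))"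
    and int_0Y: "integrable M (\<lambda>w. P g (X w) / P 0 (X w) * cohort D T 0 w * Y t w)"
    and int_0mu: "integrable M (\<lambda>w. P g (X w) / P 0 (X w) * cohort D T 0 w * mu0 (X w))"
    and int_mg: "integrable M (\<lambda>w. cohort D T g w * m g (X w))"
    and int_m0: "integrable M (\<lambda>w. cohort D T g w * m 0 (X w))"
    and correct: "(\<forall>s\<in>{0..T}. AE w in M. P s (X w) = real_cond_exp M (sigmaX M N X) (cohort D T s) w)
        \<or> (AE w in M. mu0 (X w) = real_cond_exp (uniform_measure M (cohort_set M D T 0)) (sigmaX M N X) (Y t) w)"
  shows "tau_DR M D T X P mu0 (Y t) g =
         (\<integral>x. (m g x - m 0 x) \<partial>(distr (uniform_measure M (cohort_set M D T g)) N X))"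

proof -
  interpret prob_space M by (rule prob)
  note [measurable] = D_meas Y_meas X_meas P_meas mu0_meas m_meas
  have sub: "subalgebra M (sigmaX M N X)" by (rule sigmaX_sub[OF X_meas])
  interpret MF: finite_measure_subalgebra M "sigmaX M N X"
    by unfold_locales (rule sub)
  have cm[measurable]: "\<And>s. cohort D T s \<in> borel_measurable M" by (rule cohort_meas) simp
  have Am[measurable]: "\<And>s. cohort_set M D T s \<in> sets M" by (rule cohort_set_sets) simp
  have Xsp: "\<And>w. w \<in> space M \<Longrightarrow> X w \<in> space N" using X_meas by (auto simp: measurable_def)
  define h where "h = (\<lambda>w. P g (X w) / P 0 (X w))"
  have hm[measurable]: "h \<in> borel_measurable M" unfolding h_def by measurable
  have hF: "h \<in> borel_measurable (sigmaX M N X)" unfolding h_def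
    by (rule sigmaX_meas[OF X_meas, of "\<lambda>x. P g x / P 0 x"]) measurable
  define c where "c = cohort D T"
  have cm'[measurable]: "\<And>s. c s \<in> borel_measurable M" unfolding c_def by simp
  have cind: "\<And>s w. w \<in> space M \<Longrightarrow> c s w = indicator (cohort_set M D T s) w"
    unfolding c_def by (rule cohort_ind)
  define pig where "pig = (\<integral>w. c g w \<partial>M)"
  have "pig = (\<integral>w. indicator (cohort_set M D T g) w \<partial>M)"
    unfolding pig_def by (rule Bochner_Integration.integral_cong[OF refl]) (simp add: cind)
  then have pig_meas: "pig = measure M (cohort_set M D T g)" by simp
  have pig_pos: "pig > 0" using Eg_pos unfolding pig_def c_def .
  have Ag0: "emeasure M (cohort_set M D T g) \<noteq> 0" "emeasure M (cohort_set M D T g) \<noteq> \<infinity>"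
    using pig_pos pig_meas by (auto simp: emeasure_eq_measure)
  define r0 where "r0 = real_cond_exp (uniform_measure M (cohort_set M D T 0)) (sigmaX M N X) (Y t)"
  define rg where "rg = real_cond_exp (uniform_measure M (cohort_set M D T g)) (sigmaX M N X) (Y t)"
  have i0Y: "integrable M (\<lambda>w. h w * c 0 w * Y t w)" using int_0Y unfolding h_def c_def .
  have i0mu: "integrable M (\<lambda>w. h w * c 0 w * mu0 (X w))" using int_0mu unfolding h_def c_def .
  have igY: "integrable M (\<lambda>w. c g w * Y t w)" using int_gY unfolding c_def .
  have igmu: "integrable M (\<lambda>w. c g w * mu0 (X w))" using int_gmu unfolding c_def .
  have igmg: "integrable M (\<lambda>w. c g w * m g (X w))" using int_mg unfolding c_def .
  have igm0: "integrable M (\<lambda>w. c g w * m 0 (X w))" using int_m0 unfolding c_def .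
  have i0: "integrable M (\<lambda>w. indicator (cohort_set M D T 0) w * h w * Y t w)"
    by (rule integrable_eq_on[OF i0Y]) (simp add: cind)
  note L0 = cond_unif[OF prob Am sub hF Y_meas i0, folded r0_def]
  have ae0: "AE w in M. indicator (cohort_set M D T 0) w * h w * r0 w = h w * c 0 w * m 0 (X w)"
    using m_0 AE_space by eventually_elim (simp add: cind r0_def)
  have L0int: "integrable M (\<lambda>w. h w * c 0 w * m 0 (X w))"
    by (rule integrable_cong_AE_imp[OF L0(1) _ ae0]) measurable
  have L0eq: "(\<integral>w. h w * c 0 w * Y t w \<partial>M) = (\<integral>w. h w * c 0 w * m 0 (X w) \<partial>M)"
  proof -
    have "(\<integral>w. h w * c 0 w * Y t w \<partial>M) = (\<integral>w. indicator (cohort_set M D T 0) w * h w * Y t w \<partial>M)"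
      by (rule Bochner_Integration.integral_cong[OF refl]) (simp add: cind)
    also have "\<dots> = (\<integral>w. indicator (cohort_set M D T 0) w * h w * r0 w \<partial>M)"
      using L0(2) by simp
    also have "\<dots> = (\<integral>w. h w * c 0 w * m 0 (X w) \<partial>M)"
      by (rule integral_cong_AE[OF _ _ ae0]) (auto simp: r0_def)
    finally show ?thesis .
  qed
  have ig: "integrable M (\<lambda>w. indicator (cohort_set M D T g) w * 1 * Y t w)"
    by (rule integrable_eq_on[OF igY]) (simp add: cind)
  have oneF: "(\<lambda>w. 1::real) \<in> borel_measurable (sigmaX M N X)" by simp
  note Eg = cond_unif[OF prob Am sub oneF Y_meas ig, folded rg_def]
  have aeg: "AE w in M. w \<in> cohort_set M D T g \<longrightarrow> m g (X w) = rg w"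
    using m_g unfolding rg_def by (subst (asm) AE_uniform_measure[OF Ag0(1)]) (use Ag0 in \<open>auto simp: less_top[symmetric]\<close>)
  have aeg2: "AE w in M. indicator (cohort_set M D T g) w * 1 * rg w = c g w * m g (X w)"
    using aeg AE_space by eventually_elim (auto simp: cind indicator_def)
  have E1: "(\<integral>w. c g w * m g (X w) \<partial>M) = (\<integral>w. c g w * Y t w \<partial>M)"
  proof -
    have "(\<integral>w. c g w * m g (X w) \<partial>M) = (\<integral>w. indicator (cohort_set M D T g) w * 1 * rg w \<partial>M)"
      by (rule integral_cong_AE[OF _ _ aeg2[THEN AE_mp, OF AE_I2], symmetric]) (auto simp: rg_def)
    also have "\<dots> = (\<integral>w. indicator (cohort_set M D T g) w * 1 * Y t w \<partial>M)" using Eg(2) .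
    also have "\<dots> = (\<integral>w. c g w * Y t w \<partial>M)"
      by (rule Bochner_Integration.integral_cong[OF refl]) (simp add: cind)
    finally show ?thesis .
  qed
  have XU: "X \<in> measurable (uniform_measure M (cohort_set M D T g)) N"
    using X_meas by (simp add: measurable_cong_sets[OF sets_uniform_measure refl])
  have R: "(\<integral>x. (m g x - m 0 x) \<partial>(distr (uniform_measure M (cohort_set M D T g)) N X))
      = ((\<integral>w. c g w * m g (X w) \<partial>M) - (\<integral>w. c g w * m 0 (X w) \<partial>M)) / pig"
  proof -
    have "(\<integral>x. (m g x - m 0 x) \<partial>(distr (uniform_measure M (cohort_set M D T g)) N X))
        = (\<integral>w. (m g (X w) - m 0 (X w)) \<partial>uniform_measure M (cohort_set M D T g))"
      by (rule integral_distr[OF XU]) measurable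
    also have "\<dots> = (\<integral>w. indicator (cohort_set M D T g) w * (m g (X w) - m 0 (X w)) \<partial>M) / pig"
      unfolding pig_meas by (rule unif_integral[OF Am Ag0]) measurable
    also have "(\<integral>w. indicator (cohort_set M D T g) w * (m g (X w) - m 0 (X w)) \<partial>M)
        = (\<integral>w. c g w * m g (X w) - c g w * m 0 (X w) \<partial>M)"
      by (rule Bochner_Integration.integral_cong[OF refl]) (simp add: cind algebra_simps)
    also have "\<dots> = (\<integral>w. c g w * m g (X w) \<partial>M) - (\<integral>w. c g w * m 0 (X w) \<partial>M)"
      by (rule Bochner_Integration.integral_diff[OF igmg igm0])
    finally show ?thesis .
  qed
  have Lh: "tau_DR M D T X P mu0 (Y t) g = (1 / pig) *
     ((\<integral>w. c g w * Y t w \<partial>M) - (\<integral>w. c g w * mu0 (X w) \<partial>M)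
      - ((\<integral>w. h w * c 0 w * Y t w \<partial>M) - (\<integral>w. h w * c 0 w * mu0 (X w) \<partial>M)))"
  proof -
    have "tau_DR M D T X P mu0 (Y t) g = (1 / pig) *
       (\<integral>w. (c g w - h w * c 0 w) * (Y t w - mu0 (X w)) \<partial>M)"
      by (simp add: tau_DR_def pig_def h_def c_def)
    also have "(\<integral>w. (c g w - h w * c 0 w) * (Y t w - mu0 (X w)) \<partial>M)
       = (\<integral>w. (c g w * Y t w - c g w * mu0 (X w)) - (h w * c 0 w * Y t w - h w * c 0 w * mu0 (X w)) \<partial>M)"
      by (rule Bochner_Integration.integral_cong[OF refl]) (simp add: algebra_simps)
    also have "\<dots> = ((\<integral>w. c g w * Y t w \<partial>M) - (\<integral>w. c g w * mu0 (X w) \<partial>M)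
      - ((\<integral>w. h w * c 0 w * Y t w \<partial>M) - (\<integral>w. h w * c 0 w * mu0 (X w) \<partial>M)))"
      using igY igmu i0Y i0mu by simp
    finally show ?thesis .
  qed
  have K: "(\<integral>w. c g w * mu0 (X w) \<partial>M) + (\<integral>w. h w * c 0 w * Y t w \<partial>M)
      - (\<integral>w. h w * c 0 w * mu0 (X w) \<partial>M) = (\<integral>w. c g w * m 0 (X w) \<partial>M)"
  proof (cases "\<forall>s\<in>{0..T}. AE w in M. P s (X w) = real_cond_exp M (sigmaX M N X) (cohort D T s) w")
    case True
    have pP0: "AE w in M. P 0 (X w) = real_cond_exp M (sigmaX M N X) (c 0) w"
      using True unfolding c_def by auto
    have pPg: "AE w in M. P g (X w) = real_cond_exp M (sigmaX M N X) (c g) w"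
      using True g_range unfolding c_def by auto
    have L1: "(\<integral>w. h w * c 0 w * f (X w) \<partial>M) = (\<integral>w. c g w * f (X w) \<partial>M)"
      if fm[measurable]: "f \<in> borel_measurable N" and i1: "integrable M (\<lambda>w. h w * c 0 w * f (X w))"
        and i2: "integrable M (\<lambda>w. c g w * f (X w))" for f
    proof -
      have fF: "(\<lambda>w. f (X w)) \<in> borel_measurable (sigmaX M N X)" by (rule sigmaX_meas[OF X_meas fm])
      have hfF: "(\<lambda>w. h w * f (X w)) \<in> borel_measurable (sigmaX M N X)"
        by (intro borel_measurable_times hF fF)
      have i1': "integrable M (\<lambda>w. (h w * f (X w)) * c 0 w)"
        by (rule integrable_eq_on[OF i1]) (simp add: algebra_simps)
      have i2': "integrable M (\<lambda>w. f (X w) * c g w)"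
        by (rule integrable_eq_on[OF i2]) (simp add: algebra_simps)
      have a: "(\<integral>w. (h w * f (X w)) * real_cond_exp M (sigmaX M N X) (c 0) w \<partial>M) = (\<integral>w. (h w * f (X w)) * c 0 w \<partial>M)"
        by (rule MF.real_cond_exp_intg(2)[OF i1' hfF]) simp
      have b: "(\<integral>w. f (X w) * real_cond_exp M (sigmaX M N X) (c g) w \<partial>M) = (\<integral>w. f (X w) * c g w \<partial>M)"
        by (rule MF.real_cond_exp_intg(2)[OF i2' fF]) simp
      have ae: "AE w in M. (h w * f (X w)) * real_cond_exp M (sigmaX M N X) (c 0) w
          = f (X w) * real_cond_exp M (sigmaX M N X) (c g) w"
        using pP0 pPg AE_space
      proof eventually_elim
        case (elim w)
        then have "P 0 (X w) > 0" using P0_pos Xsp by blast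
        with elim show ?case by (simp add: h_def)
      qed
      have "(\<integral>w. h w * c 0 w * f (X w) \<partial>M) = (\<integral>w. (h w * f (X w)) * c 0 w \<partial>M)"
        by (rule Bochner_Integration.integral_cong[OF refl]) (simp add: algebra_simps)
      also have "\<dots> = (\<integral>w. (h w * f (X w)) * real_cond_exp M (sigmaX M N X) (c 0) w \<partial>M)"
        using a by simp
      also have "\<dots> = (\<integral>w. f (X w) * real_cond_exp M (sigmaX M N X) (c g) w \<partial>M)"
        by (rule integral_cong_AE[OF _ _ ae]) measurable
      also have "\<dots> = (\<integral>w. c g w * f (X w) \<partial>M)"
        using b by (simp add: mult.commute)
      finally show ?thesis .
    qed
    show ?thesis
      using L1[OF mu0_meas i0mu igmu] L1[OF m_meas L0int igm0] L0eq by simp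
  next
    case False
    then have cm2: "AE w in M. mu0 (X w) = r0 w" using correct unfolding r0_def by auto
    have ae: "AE w in M. mu0 (X w) = m 0 (X w)" using cm2 m_0 unfolding r0_def by eventually_elim simp
    have e1: "(\<integral>w. c g w * mu0 (X w) \<partial>M) = (\<integral>w. c g w * m 0 (X w) \<partial>M)"
      by (rule integral_cong_AE) (use ae in \<open>auto elim: AE_mp\<close>)
    have e2: "(\<integral>w. h w * c 0 w * mu0 (X w) \<partial>M) = (\<integral>w. h w * c 0 w * m 0 (X w) \<partial>M)"
      by (rule integral_cong_AE) (use ae in \<open>auto elim: AE_mp\<close>)
    show ?thesis using e1 e2 L0eq by simp
  qed
  show ?thesis
    unfolding Lh R using K E1 pig_pos by (simp add: field_simps)
qed

end
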